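(* In the power-splitting setting described in the context, let $X_k>0$, $Y_k\ge0$ and $\lambda_k\ge0$. For a nonzero real $\theta$, say the system $S(\theta)$ is feasible if there exist $(\boldsymbol\rho,\mathbf{p},\mathbf{w}_{\mathrm{p}})$ satisfying (F) together with $\sum_n|y_n|^2\ge\lambda_kY_k$, $\sum_nx_n^2|g_n|^2\ge\lambda_kX_k$, and $\theta\,\mathbf{x}\circ\mathbf{g}=\mathbf{y}$. If $S(\theta)$ is feasible for some nonzero real $\theta$, then $S(\theta_k)$ is feasible for $\theta_k=\sqrt{Y_k/X_k}$; that is, the coefficient in the system can be set to $\theta_k=\sqrt{Y_k/X_k}$.
   Context: An access point (HAP) with $K$ antennas and fixed normalized transmit power $p_{\mathrm{o}}>0$ serves $N$ single-antenna relays $\mathcal{N}=\{1,\dots,N\}$ sharing spectrum with $M$ cellular users $\mathcal{C}=\{1,\dots,M\}$. $\mathbf{f}_n\in\mathbb{C}^K$ is the HAP-to-relay-$n$ channel, $\mathbf{g}\in\mathbb{C}^N$ the relays-to-receiver channel, $\eta\in(0,1]$ the energy conversion efficiency. Variables: HAP beamformer $\mathbf{w}_{\mathrm{p}}\in\mathbb{C}^K$ with $\mathbf{W}_{\mathrm{p}}=\mathbf{w}_{\mathrm{p}}\mathbf{w}_{\mathrm{p}}^H$, PS ratios $\boldsymbol\rho\in[0,1]^N$, relay powers $\mathbf{p}\in\mathbb{R}^N_{\ge0}$; $y_n=\sqrt{(1-\rho_n)p_{\mathrm{o}}}\,\mathbf{f}_n^H\mathbf{w}_{\mathrm{p}}$,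 $x_n=\big(p_n/((1-\rho_n)p_{\mathrm{o}}\mathbf{f}_n^H\mathbf{W}_{\mathrm{p}}\mathbf{f}_n+1)\big)^{1/2}$, $\circ$ the entrywise product. Constraints (F): (i) for each $m\in\mathcal{C}$, $\sup_{\mathbb{P}\in\mathcal{P}_m}\mathbb{P}\big(\sum_n|z_{nm}|^2p_n\ge\bar\phi_m\big)\le\zeta$, where $\mathcal{P}_m$ is the set of all distributions of the random channel $\mathbf{z}_m\in\mathbb{C}^N$ (relays to user $m$) with prescribed first- and second-order moments, $\bar\phi_m>0$, $\zeta\in(0,1)$; (ii) $p_n\le\eta p_{\mathrm{o}}\rho_n\mathbf{f}_n^H\mathbf{W}_{\mathrm{p}}\mathbf{f}_n$ for all $n$; (iii) $0\le\rho_n\le1$, $\mathbf{p}\succeq\mathbf{0}$, $\mathrm{Tr}(\mathbf{W}_{\mathrm{p}})\le1$. *)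

theory Defs
  imports "HOL-Probability.Probability"
begin

definition hinner :: "complex^'k \<Rightarrow> complex^'k \<Rightarrow> complex" where
  "hinner a b = (\<Sum>i\<in>UNIV. cnj (a$i) * b$i)"

text \<open>Ambiguity set: all probability distributions of a random vector z in C^N
  (Borel measures on C^N) with prescribed mean mu and prescribed second-order
  moment matrix E[z z^H] = S.\<close>
definition moment_set :: "complex^'n \<Rightarrow> complex^'n^'n \<Rightarrow> (complex^'n) measure set" where
  "moment_set mu S = {P. prob_space P \<and> sets P = sets borel \<and>
     (\<forall>i. integrable P (\<lambda>z. z$i) \<and> (\<integral>z. z$i \<partial>P) = mu$i) \<and>
     (\<forall>i j. integrable P (\<lambda>z. z$i * cnj (z$j)) \<and> (\<integral>z. z$i * cnj (z$j) \<partial>P) = S$i$j)}"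

definition ysig :: "real \<Rightarrow> ('n \<Rightarrow> complex^'k) \<Rightarrow> complex^'k \<Rightarrow> ('n \<Rightarrow> real) \<Rightarrow> 'n \<Rightarrow> complex" where
  "ysig po f w rho n = complex_of_real (sqrt ((1 - rho n) * po)) * hinner (f n) w"

text \<open>Amplification coefficient x_n at relay n (f_n^H W_p f_n = |f_n^H w_p|^2).\<close>
definition xamp :: "real \<Rightarrow> ('n \<Rightarrow> complex^'k) \<Rightarrow> complex^'k \<Rightarrow> ('n \<Rightarrow> real) \<Rightarrow> ('n \<Rightarrow> real) \<Rightarrow> 'n \<Rightarrow> real" where
  "xamp po f w rho p n = sqrt (p n / ((1 - rho n) * po * (cmod (hinner (f n) w))\<^sup>2 + 1))"

definition feasF ::
  "real \<Rightarrow> real \<Rightarrow> ('n \<Rightarrow> complex^'k) \<Rightarrow> ('m \<Rightarrow> complex^'n) \<Rightarrow> ('m \<Rightarrow> complex^'n^'n)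
   \<Rightarrow> ('m \<Rightarrow> real) \<Rightarrow> real \<Rightarrow> complex^'k \<Rightarrow> ('n \<Rightarrow> real) \<Rightarrow> ('n \<Rightarrow> real) \<Rightarrow> bool" where
  "feasF po eta f mu S phi zeta w rho p \<longleftrightarrow>
     (\<forall>m. \<forall>P\<in>moment_set (mu m) (S m).
         measure P {z. (\<Sum>n\<in>UNIV. (cmod (z$n))\<^sup>2 * p n) \<ge> phi m} \<le> zeta) \<and>
     (\<forall>n. p n \<le> eta * po * rho n * (cmod (hinner (f n) w))\<^sup>2) \<and>
     (\<forall>n. 0 \<le> rho n \<and> rho n \<le> 1) \<and> (\<forall>n. 0 \<le> p n) \<and>
     (\<Sum>i\<in>UNIV. (cmod (w$i))\<^sup>2) \<le> 1"

definition sysS ::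
  "real \<Rightarrow> real \<Rightarrow> ('n \<Rightarrow> complex^'k) \<Rightarrow> complex^'n \<Rightarrow> ('m \<Rightarrow> complex^'n) \<Rightarrow> ('m \<Rightarrow> complex^'n^'n)
   \<Rightarrow> ('m \<Rightarrow> real) \<Rightarrow> real \<Rightarrow> real \<Rightarrow> real \<Rightarrow> real \<Rightarrow> real \<Rightarrow> bool" where
  "sysS po eta f g mu S phi zeta X Y lam theta \<longleftrightarrow>
     (\<exists>rho p w. feasF po eta f mu S phi zeta w rho p \<and>
        (\<Sum>n\<in>UNIV. (cmod (ysig po f w rho n))\<^sup>2) \<ge> lam * Y \<and>
        (\<Sum>n\<in>UNIV. (xamp po f w rho p n)\<^sup>2 * (cmod (g$n))\<^sup>2) \<ge> lam * X \<and>
        (\<forall>n. complex_of_real (theta * xamp po f w rho p n) * g$n = ysig po f w rho n))"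

end

theory Submission imports Defs begin

lemma hinner_neg: "hinner a (-w) = - hinner a w"
  unfolding hinner_def by (simp add: sum_negf)

lemma chance_mono:
  fixes p p' :: "'n::finite \<Rightarrow> real"
  assumes P: "P \<in> moment_set mu S" and le: "\<And>n. p' n \<le> p n" and nn: "\<And>n. 0 \<le> p' n"
  shows "measure P {z. (\<Sum>n\<in>UNIV. (cmod (z$n))\<^sup>2 * p' n) \<ge> c}
       \<le> measure P {z. (\<Sum>n\<in>UNIV. (cmod (z$n))\<^sup>2 * p n) \<ge> c}"
proof -
  have ps: "prob_space P" and sP: "sets P = sets borel" using P unfolding moment_set_def by auto
  have cl: "closed {z::complex^'n. c \<le> (\<Sum>n\<in>UNIV. (cmod (z$n))\<^sup>2 * p n)}"
    by (intro closed_Collect_le continuous_intros)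
  hence "{z::complex^'n. c \<le> (\<Sum>n\<in>UNIV. (cmod (z$n))\<^sup>2 * p n)} \<in> sets P"
    using sP borel_closed by blast
  moreover have "{z. (\<Sum>n\<in>UNIV. (cmod (z$n))\<^sup>2 * p' n) \<ge> c} \<subseteq> {z. (\<Sum>n\<in>UNIV. (cmod (z$n))\<^sup>2 * p n) \<ge> c}"
  proof
    fix z assume "z \<in> {z. (\<Sum>n\<in>UNIV. (cmod (z$n))\<^sup>2 * p' n) \<ge> c}"
    moreover have "(\<Sum>n\<in>UNIV. (cmod (z$n))\<^sup>2 * p' n) \<le> (\<Sum>n\<in>UNIV. (cmod (z$n))\<^sup>2 * p n)"
      by (intro sum_mono mult_left_mono le) auto
    ultimately show "z \<in> {z. (\<Sum>n\<in>UNIV. (cmod (z$n))\<^sup>2 * p n) \<ge> c}" by auto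
  qed
  moreover have fm: "finite_measure P" using ps unfolding prob_space_def by blast
  ultimately show ?thesis using finite_measure.finite_measure_mono[OF fm] by blast
qed

lemma feasF_mono:
  assumes F: "feasF po eta f mu S phi zeta w rho p"
    and le: "\<And>n. p' n \<le> p n" and nn: "\<And>n. 0 \<le> p' n"
    and r1: "\<And>n. rho n \<le> rho' n" and r2: "\<And>n. rho' n \<le> 1"
    and pe: "0 \<le> eta * po"
  shows "feasF po eta f mu S phi zeta w rho' p'"
proof -
  have "p' n \<le> eta * po * rho' n * (cmod (hinner (f n) w))\<^sup>2" for n
  proof -
    have "p n \<le> eta * po * rho n * (cmod (hinner (f n) w))\<^sup>2" using F unfolding feasF_def by blast
    also have "\<dots> \<le> eta * po * rho' n * (cmod (hinner (f n) w))\<^sup>2"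
      by (intro mult_right_mono mult_left_mono r1 pe) auto
    finally show ?thesis using le[of n] by linarith
  qed
  moreover have "0 \<le> rho' n" for n using F r1[of n] unfolding feasF_def by (meson order_trans)
  moreover have "\<forall>m. \<forall>P\<in>moment_set (mu m) (S m).
         measure P {z. (\<Sum>n\<in>UNIV. (cmod (z$n))\<^sup>2 * p' n) \<ge> phi m} \<le> zeta"
  proof (intro allI ballI)
    fix m P assume P: "P \<in> moment_set (mu m) (S m)"
    have "measure P {z. (\<Sum>n\<in>UNIV. (cmod (z$n))\<^sup>2 * p n) \<ge> phi m} \<le> zeta"
      using F P unfolding feasF_def by blast
    moreover have "measure P {z. (\<Sum>n\<in>UNIV. (cmod (z$n))\<^sup>2 * p' n) \<ge> phi m} \<le> measure P {z. (\<Sum>n\<in>UNIV. (cmod (z$n))\<^sup>2 * p n) \<ge> phi m}"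
      by (rule chance_mono[OF P]) (use le nn in auto)
    ultimately show "measure P {z. (\<Sum>n\<in>UNIV. (cmod (z$n))\<^sup>2 * p' n) \<ge> phi m} \<le> zeta"
      by linarith
  qed
  ultimately show ?thesis using F r2 nn unfolding feasF_def by blast
qed

lemma sysS_neg:
  assumes "sysS po eta f g mu S phi zeta X Y lam theta"
  shows "sysS po eta f g mu S phi zeta X Y lam (-theta)"
proof -
  obtain rho p w where F: "feasF po eta f mu S phi zeta w rho p"
    and A: "(\<Sum>n\<in>UNIV. (cmod (ysig po f w rho n))\<^sup>2) \<ge> lam * Y"
    and B: "(\<Sum>n\<in>UNIV. (xamp po f w rho p n)\<^sup>2 * (cmod (g$n))\<^sup>2) \<ge> lam * X"
    and R: "\<forall>n. complex_of_real (theta * xamp po f w rho p n) * g$n = ysig po f w rho n"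
    using assms unfolding sysS_def by blast
  have y: "ysig po f (-w) rho n = - ysig po f w rho n" for n
    unfolding ysig_def hinner_neg by simp
  have x: "xamp po f (-w) rho p n = xamp po f w rho p n" for n
    unfolding xamp_def hinner_neg by simp
  have F': "feasF po eta f mu S phi zeta (-w) rho p"
    using F unfolding feasF_def hinner_neg by simp
  have R': "complex_of_real (-theta * xamp po f (-w) rho p n) * g$n = ysig po f (-w) rho n" for n
    using R[rule_format, of n] unfolding x y by (metis minus_mult_left mult_minus_left of_real_minus)
  show ?thesis unfolding sysS_def
    by (rule exI[of _ rho], rule exI[of _ p], rule exI[of _ "-w"]) (use F' A B R' x y in simp)
qed

lemma sysS_down:
  assumes S: "sysS po eta f g mu S phi zeta X Y lam theta"
    and th: "theta > 0" and t0: "0 \<le> t" and tle: "t \<le> theta"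
    and tX: "t\<^sup>2 = Y / X" and X: "X > 0" and lam: "lam \<ge> 0" and po: "po > 0" and eta: "eta > 0"
  shows "sysS po eta f g mu S phi zeta X Y lam t"
proof -
  obtain rho p w where F: "feasF po eta f mu S phi zeta w rho p"
    and A: "(\<Sum>n\<in>UNIV. (cmod (ysig po f w rho n))\<^sup>2) \<ge> lam * Y"
    and B: "(\<Sum>n\<in>UNIV. (xamp po f w rho p n)\<^sup>2 * (cmod (g$n))\<^sup>2) \<ge> lam * X"
    and R: "\<forall>n. complex_of_real (theta * xamp po f w rho p n) * g$n = ysig po f w rho n"
    using S unfolding sysS_def by blast
  define s where "s = (t / theta)\<^sup>2"
  have s0: "0 \<le> s" and s1: "s \<le> 1" unfolding s_def using th t0 tle
    by (auto simp: power_le_one)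
  have sqs: "sqrt s = t / theta" unfolding s_def using th t0 by simp
  define a where "a n = (1 - rho n) * po * (cmod (hinner (f n) w))\<^sup>2" for n
  define x where "x n = xamp po f w rho p n" for n
  define rho' where "rho' n = 1 - s * (1 - rho n)" for n
  define p' where "p' n = (x n)\<^sup>2 * (s * a n + 1)" for n
  have r01: "0 \<le> rho n \<and> rho n \<le> 1" for n using F unfolding feasF_def by blast
  have pn: "0 \<le> p n" for n using F unfolding feasF_def by blast
  have a0: "0 \<le> a n" for n unfolding a_def using r01[of n] po by simp
  have x0: "0 \<le> x n" for n unfolding x_def xamp_def using pn[of n] a0[of n] unfolding a_def
    by (metis divide_nonneg_nonneg add_nonneg_nonneg zero_le_one real_sqrt_ge_zero)
  have x2: "(x n)\<^sup>2 = p n / (a n + 1)" for n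
    unfolding x_def xamp_def a_def using pn[of n] a0[of n] unfolding a_def
    by (metis divide_nonneg_nonneg add_nonneg_nonneg zero_le_one real_sqrt_pow2)
  have p'le: "p' n \<le> p n" for n
  proof -
    have "p' n = p n * (s * a n + 1) / (a n + 1)" unfolding p'_def x2 by simp
    also have "\<dots> \<le> p n" using a0[of n] s1 s0 pn[of n]
      by (simp add: divide_le_eq mult_left_mono mult_left_le_one_le mult_le_cancel_left)
    finally show ?thesis .
  qed
  have p'0: "0 \<le> p' n" for n unfolding p'_def using s0 a0[of n] by simp
  have rr: "rho n \<le> rho' n" for n unfolding rho'_def proof -
    have "0 \<le> (1 - s) * (1 - rho n)" using r01[of n] s1 by simp
    thus "rho n \<le> 1 - s * (1 - rho n)" by (simp add: algebra_simps)
  qed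
  have r'1: "rho' n \<le> 1" for n unfolding rho'_def using r01[of n] s0 by simp
  have F': "feasF po eta f mu S phi zeta w rho' p'"
    by (rule feasF_mono[OF F]) (use p'le p'0 rr r'1 po eta in auto)
  have x': "xamp po f w rho' p' n = x n" for n
  proof -
    have "(1 - rho' n) * po * (cmod (hinner (f n) w))\<^sup>2 = s * a n"
      unfolding rho'_def a_def by simp
    hence "xamp po f w rho' p' n = sqrt ((x n)\<^sup>2)"
      unfolding xamp_def p'_def using s0 a0[of n]
    proof -
      assume "(1 - rho' n) * po * (cmod (hinner (f n) w))\<^sup>2 = s * a n"
      moreover have "s * a n + 1 > 0" using s0 a0[of n] by (simp add: add_nonneg_pos)
      ultimately show "sqrt ((x n)\<^sup>2 * (s * a n + 1) / ((1 - rho' n) * po * (cmod (hinner (f n) w))\<^sup>2 + 1)) = sqrt ((x n)\<^sup>2)"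
        by simp
    qed
    thus ?thesis using x0[of n] by simp
  qed
  have y': "ysig po f w rho' n = complex_of_real (t / theta) * ysig po f w rho n" for n
  proof -
    have "sqrt ((1 - rho' n) * po) = sqrt s * sqrt ((1 - rho n) * po)"
      unfolding rho'_def by (simp add: real_sqrt_mult)
    thus ?thesis unfolding ysig_def sqs by simp
  qed
  have R': "complex_of_real (t * xamp po f w rho' p' n) * g$n = ysig po f w rho' n" for n
  proof -
    have "ysig po f w rho' n = complex_of_real (t / theta) * (complex_of_real (theta * x n) * g$n)"
      unfolding y' using R x_def by simp
    also have "\<dots> = complex_of_real (t * x n) * g$n" using th by simp
    finally show ?thesis unfolding x' by simp
  qed
  have ym: "(cmod (ysig po f w rho n))\<^sup>2 = theta\<^sup>2 * ((x n)\<^sup>2 * (cmod (g$n))\<^sup>2)" for n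
  proof -
    have "cmod (ysig po f w rho n) = \<bar>theta\<bar> * x n * cmod (g$n)"
      using R[rule_format, of n] x0[of n] unfolding x_def[symmetric]
      by (metis norm_mult norm_of_real abs_mult abs_of_nonneg)
    thus ?thesis by (simp add: power_mult_distrib)
  qed
  have ym': "(cmod (ysig po f w rho' n))\<^sup>2 = t\<^sup>2 * ((x n)\<^sup>2 * (cmod (g$n))\<^sup>2)" for n
  proof -
    have "cmod (ysig po f w rho' n) = \<bar>t\<bar> * x n * cmod (g$n)"
      using R'[of n] x0[of n] unfolding x'
      by (metis norm_mult norm_of_real abs_mult abs_of_nonneg)
    thus ?thesis by (simp add: power_mult_distrib)
  qed
  define Bs where "Bs = (\<Sum>n\<in>UNIV. (x n)\<^sup>2 * (cmod (g$n))\<^sup>2)"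
  have Bs: "Bs \<ge> lam * X" using B unfolding Bs_def x_def .
  have "(\<Sum>n\<in>UNIV. (cmod (ysig po f w rho' n))\<^sup>2) = t\<^sup>2 * Bs"
    unfolding ym' Bs_def by (simp add: sum_distrib_left)
  also have "\<dots> \<ge> t\<^sup>2 * (lam * X)" using Bs by (simp add: mult_left_mono)
  also have "t\<^sup>2 * (lam * X) = lam * Y" unfolding tX using X by simp
  finally have A': "(\<Sum>n\<in>UNIV. (cmod (ysig po f w rho' n))\<^sup>2) \<ge> lam * Y" .
  have B': "(\<Sum>n\<in>UNIV. (xamp po f w rho' p' n)\<^sup>2 * (cmod (g$n))\<^sup>2) \<ge> lam * X"
    unfolding x' using Bs Bs_def by simp
  show ?thesis unfolding sysS_def
    by (rule exI[of _ rho'], rule exI[of _ p'], rule exI[of _ w]) (use F' A' B' R' in simp)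
qed

lemma sysS_up:
  assumes S: "sysS po eta f g mu S phi zeta X Y lam theta"
    and th: "theta > 0" and tle: "theta \<le> t"
    and tX: "t\<^sup>2 = Y / X" and X: "X > 0" and lam: "lam \<ge> 0" and po: "po > 0" and eta: "eta > 0"
  shows "sysS po eta f g mu S phi zeta X Y lam t"
proof -
  obtain rho p w where F: "feasF po eta f mu S phi zeta w rho p"
    and A: "(\<Sum>n\<in>UNIV. (cmod (ysig po f w rho n))\<^sup>2) \<ge> lam * Y"
    and B: "(\<Sum>n\<in>UNIV. (xamp po f w rho p n)\<^sup>2 * (cmod (g$n))\<^sup>2) \<ge> lam * X"
    and R: "\<forall>n. complex_of_real (theta * xamp po f w rho p n) * g$n = ysig po f w rho n"
    using S unfolding sysS_def by blast
  have t0: "t > 0" using th tle by simp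
  define c where "c = theta / t"
  have c0: "0 < c" and c1: "c \<le> 1" unfolding c_def using th tle t0 by auto
  define p' where "p' n = c\<^sup>2 * p n" for n
  have pn: "0 \<le> p n" for n using F unfolding feasF_def by blast
  have r01: "0 \<le> rho n \<and> rho n \<le> 1" for n using F unfolding feasF_def by blast
  have p'le: "p' n \<le> p n" for n unfolding p'_def using pn[of n] c0 c1
    by (simp add: mult_left_le_one_le power_le_one)
  have p'0: "0 \<le> p' n" for n unfolding p'_def using pn[of n] by simp
  have F': "feasF po eta f mu S phi zeta w rho p'"
    by (rule feasF_mono[OF F]) (use p'le p'0 r01 po eta in auto)
  have x': "xamp po f w rho p' n = c * xamp po f w rho p n" for n
    unfolding xamp_def p'_def using c0
    by (simp add: real_sqrt_mult times_divide_eq_right[symmetric] del: times_divide_eq_right)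
  have R': "complex_of_real (t * xamp po f w rho p' n) * g$n = ysig po f w rho n" for n
    using R[rule_format, of n] unfolding x' c_def using t0 by simp
  define x where "x n = xamp po f w rho p n" for n
  have x0: "0 \<le> x n" for n
  proof -
    have "0 \<le> (1 - rho n) * po * (cmod (hinner (f n) w))\<^sup>2" using r01[of n] po by simp
    thus ?thesis unfolding x_def xamp_def using pn[of n]
      by (metis divide_nonneg_nonneg add_nonneg_nonneg zero_le_one real_sqrt_ge_zero)
  qed
  have ym: "(cmod (ysig po f w rho n))\<^sup>2 = theta\<^sup>2 * ((x n)\<^sup>2 * (cmod (g$n))\<^sup>2)" for n
  proof -
    have "cmod (ysig po f w rho n) = \<bar>theta\<bar> * x n * cmod (g$n)"
      using R[rule_format, of n] x0[of n] unfolding x_def[symmetric]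
      by (metis norm_mult norm_of_real abs_mult abs_of_nonneg)
    thus ?thesis by (simp add: power_mult_distrib)
  qed
  define Bs where "Bs = (\<Sum>n\<in>UNIV. (x n)\<^sup>2 * (cmod (g$n))\<^sup>2)"
  have As: "(\<Sum>n\<in>UNIV. (cmod (ysig po f w rho n))\<^sup>2) = theta\<^sup>2 * Bs"
    unfolding ym Bs_def by (simp add: sum_distrib_left)
  have "(\<Sum>n\<in>UNIV. (xamp po f w rho p' n)\<^sup>2 * (cmod (g$n))\<^sup>2) = c\<^sup>2 * Bs"
    unfolding x' Bs_def x_def by (simp add: sum_distrib_left power_mult_distrib algebra_simps)
  also have "c\<^sup>2 * Bs = (theta\<^sup>2 * Bs) / t\<^sup>2" unfolding c_def by (simp add: power_divide)
  also have "(theta\<^sup>2 * Bs) / t\<^sup>2 \<ge> (lam * Y) / t\<^sup>2"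
    using A As t0 by (simp add: divide_right_mono)
  also have "(lam * Y) / t\<^sup>2 = lam * X"
  proof -
    have "Y / X > 0" using tX t0 by (metis zero_less_power)
    hence "Y > 0" using X by (simp add: zero_less_divide_iff)
    thus ?thesis unfolding tX using X by (simp add: field_simps)
  qed
  finally have B': "(\<Sum>n\<in>UNIV. (xamp po f w rho p' n)\<^sup>2 * (cmod (g$n))\<^sup>2) \<ge> lam * X" .
  show ?thesis unfolding sysS_def
    by (rule exI[of _ rho], rule exI[of _ p'], rule exI[of _ w]) (use F' A B' R' in simp)
qed

theorem proposition6:
  fixes po eta zeta X Y lam :: real
    and f :: "'n::finite \<Rightarrow> complex^'k::finite"
    and g :: "complex^'n"
    and mu :: "'m::finite \<Rightarrow> complex^'n"
    and S :: "'m \<Rightarrow> complex^'n^'n"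
    and phi :: "'m \<Rightarrow> real"
  assumes "po > 0" and "0 < eta" and "eta \<le> 1"
    and "\<forall>m. phi m > 0" and "0 < zeta" and "zeta < 1"
    and "X > 0" and "Y \<ge> 0" and "lam \<ge> 0"
    and "\<exists>theta::real. theta \<noteq> 0 \<and> sysS po eta f g mu S phi zeta X Y lam theta"
  shows "sysS po eta f g mu S phi zeta X Y lam (sqrt (Y / X))"
proof -
  obtain theta where th0: "theta \<noteq> 0" and S0: "sysS po eta f g mu S phi zeta X Y lam theta"
    using assms(10) by blast
  obtain th where th: "th > 0" and S1: "sysS po eta f g mu S phi zeta X Y lam th"
  proof (cases "theta > 0")
    case True thus ?thesis using that S0 by blast
  next
    case False
    hence "-theta > 0" using th0 by simp
    thus ?thesis using that sysS_neg[OF S0] by blast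
  qed
  have YX: "0 \<le> Y / X" using assms by simp
  have tX: "(sqrt (Y / X))\<^sup>2 = Y / X" using YX by simp
  show ?thesis
  proof (cases "sqrt (Y / X) \<le> th")
    case True
    show ?thesis by (rule sysS_down[OF S1 th _ True tX]) (use assms YX in auto)
  next
    case False
    show ?thesis by (rule sysS_up[OF S1 th _ tX]) (use assms False in auto)
  qed
qed

end
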